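(* Let $X$ be a real normed linear space with zero $\theta$, such that $\dim X>1$ and the norm is strictly convex. Let $m\in\mathbb{N}$ with $\dim X\geqslant m$ (i.e. $X$ contains $m$ linearly independent elements). Let $E$ satisfy $B(\theta,1)\subseteq E\subseteq\overline{B}(\theta,1)$ and $E=\bigcup_{i=1}^m A_i$, where $A_i\cong A_j$ for all $i,j$. Then either $\theta\in\bigcap_{i=1}^m\mathrm{Int}\,A_i$, or $\theta\notin\bigcup_{i=1}^m\mathrm{Int}\,A_i$.
   Context: $B(\theta,1)=\{x:\|x\|<1\}$, $\overline{B}(\theta,1)=\{x:\|x\|\leqslant1\}$. The norm is strictly convex if for all $x\ne y$ with $\|x\|=\|y\|=1$ and $\lambda\in(0,1)$, $\|\lambda x+(1-\lambda)y\|<1$. Sets $A,B\subseteq X$ are congruent, $A\cong B$, if there is a surjective map $f\colon X\to X$ with $\|f(x)-f(y)\|=\|x-y\|$ for all $x,y$ and $f(A)=B$. $\mathrm{Int}\,A$ is the set of $x\in A$ such that some open ball $B(x,\varepsilon)\subseteq A$. Completeness of $X$ is not assumed. *)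

theory Defs
  imports "HOL-Analysis.Analysis"
begin

definition strictly_convex_norm :: "'a::real_normed_vector itself \<Rightarrow> bool" where
  "strictly_convex_norm _ \<longleftrightarrow>
     (\<forall>x y :: 'a. \<forall>t::real. x \<noteq> y \<and> norm x = 1 \<and> norm y = 1 \<and> 0 < t \<and> t < 1
        \<longrightarrow> norm (t *\<^sub>R x + (1 - t) *\<^sub>R y) < 1)"

definition congruent_sets :: "'a::real_normed_vector set \<Rightarrow> 'a set \<Rightarrow> bool" where
  "congruent_sets A B \<longleftrightarrow>
     (\<exists>f :: 'a \<Rightarrow> 'a. surj f \<and> (\<forall>x y. norm (f x - f y) = norm (x - y)) \<and> f ` A = B)"

end

theory Submission
  imports Defs
begin

lemma cont_Phi:
  fixes B :: "'a::real_normed_vector set"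
  assumes "finite B"
  shows "continuous_map (product_topology (\<lambda>_. euclideanreal) B) euclidean (\<lambda>l. \<Sum>b\<in>B. l b *\<^sub>R b)"
proof (rule continuous_map_sum[OF assms])
  fix b assume "b \<in> B"
  have "continuous_map (product_topology (\<lambda>_. euclideanreal) B) euclideanreal (\<lambda>l. l b)"
    using \<open>b \<in> B\<close> by (rule continuous_map_product_projection)
  moreover have "continuous_map euclideanreal euclidean (\<lambda>r. r *\<^sub>R b)"
    by (simp add: continuous_on_scaleR)
  ultimately show "continuous_map (product_topology (\<lambda>_. euclideanreal) B) euclidean (\<lambda>l. l b *\<^sub>R b)"
    using continuous_map_compose[of _ euclideanreal "\<lambda>l. l b" euclidean "\<lambda>r. r *\<^sub>R b"]
    by (simp add: o_def)
qed

lemma norm_equiv: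
  fixes B :: "'a::real_normed_vector set"
  assumes "finite B" "independent B"
  shows "\<exists>d>0. \<forall>l. d * (\<Sum>b\<in>B. \<bar>l b\<bar>) \<le> norm (\<Sum>b\<in>B. l b *\<^sub>R b)"
proof (cases "B = {}")
  case True then show ?thesis by (intro exI[of _ 1]) auto
next
  case False
  then obtain b0 where b0: "b0 \<in> B" by auto
  define X where "X = product_topology (\<lambda>_::'a. euclideanreal) B"
  define S1 where "S1 = Pi\<^sub>E B (\<lambda>_. {-1..1::real}) \<inter> {l \<in> topspace X. (\<Sum>b\<in>B. \<bar>l b\<bar>) \<in> {1}}"
  have cab: "continuous_map X euclideanreal (\<lambda>l. \<Sum>b\<in>B. \<bar>l b\<bar>)"
    unfolding X_def
  proof (rule continuous_map_sum[OF assms(1)])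
    fix b assume "b \<in> B"
    have "continuous_map (product_topology (\<lambda>_. euclideanreal) B) euclideanreal (\<lambda>l. l b)"
      using \<open>b \<in> B\<close> by (rule continuous_map_product_projection)
    then show "continuous_map (product_topology (\<lambda>_. euclideanreal) B) euclideanreal (\<lambda>l. \<bar>l b\<bar>)"
      by (rule continuous_map_real_abs)
  qed
  have "compactin X S1"
    unfolding S1_def
    apply (rule compact_Int_closedin)
     apply (simp add: X_def compactin_PiE)
    by (rule closedin_continuous_map_preimage[OF cab]) simp
  have cn: "continuous_map X euclideanreal (\<lambda>l. norm (\<Sum>b\<in>B. l b *\<^sub>R b))"
    unfolding X_def using cont_Phi[OF assms(1)] continuous_map_norm by blast
  have "compactin euclideanreal ((\<lambda>l. norm (\<Sum>b\<in>B. l b *\<^sub>R b)) ` S1)"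
    by (rule image_compactin[OF \<open>compactin X S1\<close> cn])
  hence cpt: "compact ((\<lambda>l. norm (\<Sum>b\<in>B. l b *\<^sub>R b)) ` S1)"
    by (simp add: compactin_euclidean_iff)
  define e where "e = restrict (\<lambda>b. if b = b0 then 1 else (0::real)) B"
  have "(\<Sum>b\<in>B. \<bar>e b\<bar>) = (\<Sum>b\<in>B. if b = b0 then 1 else 0)"
    by (rule sum.cong) (auto simp: e_def)
  also have "\<dots> = 1" using b0 assms(1) by simp
  finally have "(\<Sum>b\<in>B. \<bar>e b\<bar>) = 1" .
  hence "e \<in> S1" using b0 by (auto simp: S1_def X_def e_def)
  then obtain d where dmem: "d \<in> (\<lambda>l. norm (\<Sum>b\<in>B. l b *\<^sub>R b)) ` S1"
      and dmin: "\<forall>y \<in> (\<lambda>l. norm (\<Sum>b\<in>B. l b *\<^sub>R b)) ` S1. d \<le> y"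
    using compact_attains_inf[OF cpt] by blast
  have dpos: "d > 0"
  proof -
    obtain l where l: "l \<in> S1" "d = norm (\<Sum>b\<in>B. l b *\<^sub>R b)" using dmem by auto
    have "(\<Sum>b\<in>B. \<bar>l b\<bar>) = 1" using l by (auto simp: S1_def)
    then obtain b where "b \<in> B" "l b \<noteq> 0" by (metis (mono_tags, lifting) abs_zero sum.neutral zero_neq_one)
    hence "(\<Sum>b\<in>B. l b *\<^sub>R b) \<noteq> 0"
      using assms dependent_finite by blast
    thus ?thesis using l by simp
  qed
  show ?thesis
  proof (intro exI[of _ d] conjI allI dpos)
    fix l :: "'a \<Rightarrow> real"
    define s where "s = (\<Sum>b\<in>B. \<bar>l b\<bar>)"
    show "d * (\<Sum>b\<in>B. \<bar>l b\<bar>) \<le> norm (\<Sum>b\<in>B. l b *\<^sub>R b)"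
    proof (cases "s = 0")
      case True thus ?thesis by (simp add: s_def)
    next
      case False
      have spos: "s > 0" using False by (simp add: s_def sum_nonneg order_le_neq_trans)
      define l' where "l' = restrict (\<lambda>b. l b / s) B"
      have le: "\<bar>l b\<bar> \<le> s" if "b \<in> B" for b
        unfolding s_def using that assms(1) by (intro member_le_sum) auto
      have "(\<Sum>b\<in>B. \<bar>l' b\<bar>) = (\<Sum>b\<in>B. \<bar>l b\<bar>) / s"
        using spos by (simp add: l'_def sum_divide_distrib)
      also have "\<dots> = 1" using spos by (simp add: s_def)
      finally have "l' \<in> S1"
        using le spos by (auto simp: S1_def X_def l'_def divide_le_eq_1 abs_le_iff le_divide_eq) (smt (verit) le)
      hence "d \<le> norm (\<Sum>b\<in>B. l' b *\<^sub>R b)" using dmin by blast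
      also have "(\<Sum>b\<in>B. l' b *\<^sub>R b) = (1/s) *\<^sub>R (\<Sum>b\<in>B. l b *\<^sub>R b)"
        by (simp add: l'_def scaleR_sum_right)
      finally have "d \<le> norm (\<Sum>b\<in>B. l b *\<^sub>R b) / s" using spos by simp
      thus ?thesis using spos by (simp add: s_def[symmetric] field_simps)
    qed
  qed
qed

lemma nearest_point:
  fixes B :: "'a::real_normed_vector set" and I :: "real set" and w :: 'a
  assumes fin: "finite B" and ind: "independent B" and clI: "closed I" and I0: "0 \<in> I"
  defines "M \<equiv> {\<Sum>b\<in>B. l b *\<^sub>R b | l. \<forall>b\<in>B. l b \<in> I}"
  shows "\<exists>p\<in>M. \<forall>k\<in>M. norm (w - p) \<le> norm (w - k)"
proof -
  obtain d where dpos: "d > 0" and dle: "\<And>l. d * (\<Sum>b\<in>B. \<bar>l b\<bar>) \<le> norm (\<Sum>b\<in>B. l b *\<^sub>R b)"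
    using norm_equiv[OF fin ind] by blast
  define R where "R = 2 * norm w / d"
  define X where "X = product_topology (\<lambda>_::'a. euclideanreal) B"
  define Phi where "Phi = (\<lambda>l. \<Sum>b\<in>B. l b *\<^sub>R b)"
  define T where "T = Pi\<^sub>E B (\<lambda>_. {-R..R} \<inter> I) \<inter> {l \<in> topspace X. norm (w - Phi l) \<in> {..norm w}}"
  have cP: "continuous_map X euclidean Phi" unfolding X_def Phi_def by (rule cont_Phi[OF fin])
  have cw: "continuous_map X euclideanreal (\<lambda>l. norm (w - Phi l))"
  proof -
    have "continuous_map euclidean euclideanreal (\<lambda>x::'a. norm (w - x))"
      by (intro continuous_intros)
    from continuous_map_compose[OF cP this] show ?thesis by (simp add: o_def)
  qed
  have "compactin X T"
    unfolding T_def
    apply (rule compact_Int_closedin)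
     apply (simp add: X_def compactin_PiE compact_Int_closed clI)
    by (rule closedin_continuous_map_preimage[OF cw]) simp
  hence cpt: "compact (Phi ` T)"
    using image_compactin[OF _ cP] by (simp add: compactin_euclidean_iff)
  define z where "z = restrict (\<lambda>b. 0::real) B"
  have "z \<in> T" using I0 dpos by (auto simp: T_def X_def z_def Phi_def R_def)
  hence ne: "Phi ` T \<noteq> {}" by auto
  obtain p where pT: "p \<in> Phi ` T" and pmin: "\<forall>y\<in>Phi ` T. norm (w - p) \<le> norm (w - y)"
  proof -
    have "continuous_on (Phi ` T) (\<lambda>y. norm (w - y))" by (intro continuous_intros)
    from continuous_attains_inf[OF cpt ne this] show ?thesis using that by blast
  qed
  have "Phi z = 0" by (simp add: Phi_def z_def)
  hence pw: "norm (w - p) \<le> norm w" using pmin \<open>z \<in> T\<close> by force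
  have TM: "Phi ` T \<subseteq> M" by (auto simp: T_def M_def Phi_def)
  show ?thesis
  proof (intro bexI[of _ p] ballI)
    show "p \<in> M" using pT TM by auto
    fix k assume "k \<in> M"
    then obtain l where l: "\<forall>b\<in>B. l b \<in> I" "k = Phi l" by (auto simp: M_def Phi_def)
    show "norm (w - p) \<le> norm (w - k)"
    proof (cases "norm (w - k) \<le> norm w")
      case False thus ?thesis using pw by simp
    next
      case True
      have "norm k \<le> 2 * norm w" using True norm_triangle_ineq2[of k w] by (simp add: norm_minus_commute)
      hence sb: "(\<Sum>b\<in>B. \<bar>l b\<bar>) \<le> R" using dle[of l] dpos l(2)
        by (simp add: R_def Phi_def field_simps)
      have "\<bar>l b\<bar> \<le> R" if "b \<in> B" for b
        using member_le_sum[of b B "\<lambda>b. \<bar>l b\<bar>"] that fin sb by simp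
      hence "restrict l B \<in> T" using l True
        by (auto simp: T_def X_def Phi_def abs_le_iff) (smt (verit))
      moreover have "Phi (restrict l B) = k" using l by (simp add: Phi_def)
      ultimately show ?thesis using pmin by force
    qed
  qed
qed

lemma far_unit:
  fixes B :: "'a::real_normed_vector set" and I :: "real set" and w :: 'a
  assumes fin: "finite B" and ind: "independent B" and clI: "closed I" and I0: "0 \<in> I"
    and Iadd: "\<And>x y. x \<in> I \<Longrightarrow> y \<in> I \<Longrightarrow> x + y \<in> I"
    and Imul: "\<And>x t. x \<in> I \<Longrightarrow> t \<ge> 0 \<Longrightarrow> t * x \<in> I"
    and wM: "w \<notin> {\<Sum>b\<in>B. l b *\<^sub>R b | l. \<forall>b\<in>B. l b \<in> I}"
  shows "\<exists>u. norm u = 1 \<and> (\<forall>k\<in>{\<Sum>b\<in>B. l b *\<^sub>R b | l. \<forall>b\<in>B. l b \<in> I}. 1 \<le> norm (u - k))"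
proof -
  define M where "M = {\<Sum>b\<in>B. l b *\<^sub>R b | l. \<forall>b\<in>B. l b \<in> I}"
  obtain p where pM: "p \<in> M" and pmin: "\<forall>k\<in>M. norm (w - p) \<le> norm (w - k)"
    using nearest_point[OF fin ind clI I0, of w] unfolding M_def by blast
  have addM: "x + y \<in> M" if "x \<in> M" "y \<in> M" for x y
  proof -
    from that(1) obtain l1 where h1: "\<forall>b\<in>B. l1 b \<in> I" "x = (\<Sum>b\<in>B. l1 b *\<^sub>R b)" unfolding M_def by blast
    from that(2) obtain l2 where h2: "\<forall>b\<in>B. l2 b \<in> I" "y = (\<Sum>b\<in>B. l2 b *\<^sub>R b)" unfolding M_def by blast
    show ?thesis using h1 h2 unfolding M_def
      by (intro CollectI exI[of _ "\<lambda>b. l1 b + l2 b"]) (auto simp: Iadd scaleR_add_left sum.distrib)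
  qed
  have mulM: "t *\<^sub>R x \<in> M" if "x \<in> M" "t \<ge> 0" for x t
  proof -
    from that(1) obtain l1 where h1: "\<forall>b\<in>B. l1 b \<in> I" "x = (\<Sum>b\<in>B. l1 b *\<^sub>R b)" unfolding M_def by blast
    show ?thesis using h1 unfolding M_def using that(2)
      by (intro CollectI exI[of _ "\<lambda>b. t * l1 b"]) (auto simp: Imul scaleR_sum_right)
  qed
  define u0 where "u0 = w - p"
  have u0: "u0 \<noteq> 0" using wM pM by (auto simp: u0_def M_def)
  have key: "norm u0 \<le> norm (u0 - k)" if "k \<in> M" for k
    using pmin addM[OF pM that] by (simp add: u0_def algebra_simps)
  show ?thesis
  proof (intro exI[of _ "u0 /\<^sub>R norm u0"] conjI ballI)
    show "norm (u0 /\<^sub>R norm u0) = 1" using u0 by simp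
    fix k assume "k \<in> {\<Sum>b\<in>B. l b *\<^sub>R b | l. \<forall>b\<in>B. l b \<in> I}"
    hence k: "k \<in> M" by (simp add: M_def)
    have "norm u0 \<le> norm (u0 - norm u0 *\<^sub>R k)" using key[OF mulM[OF k]] by simp
    also have "u0 - norm u0 *\<^sub>R k = norm u0 *\<^sub>R (u0 /\<^sub>R norm u0 - k)"
      using u0 by (simp add: algebra_simps)
    finally show "1 \<le> norm (u0 /\<^sub>R norm u0 - k)" using u0 by simp
  qed
qed

lemma strict_step:
  fixes u c :: "'a::real_normed_vector"
  assumes strict: "strictly_convex_norm TYPE('a)" and "norm u = 1" "c \<noteq> 0"
    and "1 \<le> norm (u - c)" "1 \<le> norm (u - (1/2) *\<^sub>R c)"
  shows "1 < norm (u - c)"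
proof (rule ccontr)
  assume "\<not> 1 < norm (u - c)"
  hence n1: "norm (u - c) = 1" using assms(4) by simp
  have "u \<noteq> u - c" using assms(3) by simp
  have sc: "\<And>x y :: 'a. \<And>t::real. x \<noteq> y \<Longrightarrow> norm x = 1 \<Longrightarrow> norm y = 1 \<Longrightarrow> 0 < t \<Longrightarrow> t < 1
        \<Longrightarrow> norm (t *\<^sub>R x + (1 - t) *\<^sub>R y) < 1"
    using strict unfolding strictly_convex_norm_def by blast
  have "norm ((1/2::real) *\<^sub>R u + (1 - 1/2) *\<^sub>R (u - c)) < 1"
    by (rule sc) (use \<open>u \<noteq> u - c\<close> n1 assms(2) in auto)
  also have "(1/2::real) *\<^sub>R u + (1 - 1/2) *\<^sub>R (u - c) = u - (1/2) *\<^sub>R c"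
    by (simp add: algebra_simps scaleR_add_left[symmetric])
  finally show False using assms(5) by simp
qed

lemma KL:
  fixes C S :: "'a::real_normed_vector set"
  assumes strict: "strictly_convex_norm TYPE('a)" and fC: "finite C" and C0: "0 \<notin> C"
    and Cne: "C \<noteq> {}" and card: "card C \<le> card S" and indS: "independent S"
  shows "\<exists>u. norm u = 1 \<and> (\<forall>c\<in>C. 1 < norm (u - c))"
proof -
  have "\<exists>u. norm u = 1 \<and> (\<forall>c\<in>C. \<forall>t\<ge>0. 1 \<le> norm (u - t *\<^sub>R c))"
  proof (cases "independent C")
    case True
    obtain c0 where c0: "c0 \<in> C" using Cne by auto
    have wM: "- c0 \<notin> {\<Sum>b\<in>C. l b *\<^sub>R b | l. \<forall>b\<in>C. l b \<in> {0..}}"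
    proof
      assume "- c0 \<in> {\<Sum>b\<in>C. l b *\<^sub>R b | l. \<forall>b\<in>C. l b \<in> {0..}}"
      then obtain l where l: "\<forall>b\<in>C. l b \<ge> 0" "- c0 = (\<Sum>b\<in>C. l b *\<^sub>R b)" by auto
      define l' where "l' = (\<lambda>b. l b + (if b = c0 then 1 else 0))"
      have "(\<Sum>b\<in>C. l' b *\<^sub>R b) = (\<Sum>b\<in>C. l b *\<^sub>R b) + (\<Sum>b\<in>C. (if b = c0 then b else 0))"
        unfolding sum.distrib[symmetric] by (rule sum.cong) (auto simp: l'_def scaleR_add_left)
      also have "\<dots> = 0" using c0 fC by (simp add: l(2)[symmetric])
      finally have "(\<Sum>b\<in>C. l' b *\<^sub>R b) = 0" .
      moreover have "l' c0 \<noteq> 0" using l(1) c0 by (simp add: l'_def) (smt (verit))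
      ultimately show False using True fC c0 dependent_finite by blast
    qed
    obtain u where u: "norm u = 1" and uk: "\<forall>k\<in>{\<Sum>b\<in>C. l b *\<^sub>R b | l. \<forall>b\<in>C. l b \<in> {0..}}. 1 \<le> norm (u - k)"
      using far_unit[OF fC True _ _ _ _ wM] by auto
    show ?thesis
    proof (intro exI[of _ u] conjI u ballI allI impI)
      fix c and t :: real assume c: "c \<in> C" and t: "t \<ge> 0"
      have "(\<Sum>b\<in>C. (if b = c then t else 0) *\<^sub>R b) = (\<Sum>b\<in>C. if b = c then t *\<^sub>R c else 0)"
        by (rule sum.cong) auto
      also have "\<dots> = t *\<^sub>R c" using c fC by simp
      finally have "(\<Sum>b\<in>C. (if b = c then t else 0) *\<^sub>R b) = t *\<^sub>R c" .
      hence "t *\<^sub>R c \<in> {\<Sum>b\<in>C. l b *\<^sub>R b | l. \<forall>b\<in>C. l b \<in> {0..}}"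
        using t by (intro CollectI exI[of _ "\<lambda>b. if b = c then t else 0"]) auto
      thus "1 \<le> norm (u - t *\<^sub>R c)" using uk by blast
    qed
  next
    case False
    obtain B where B: "B \<subseteq> C" "independent B" "C \<subseteq> span B"
      using maximal_independent_subset by blast
    have fB: "finite B" using B fC finite_subset by blast
    have "B \<noteq> C" using B False by auto
    hence "card B < card C" using B fC psubset_card_mono by blast
    have "\<not> S \<subseteq> span B"
    proof
      assume "S \<subseteq> span B"
      hence "card S \<le> card B" using independent_span_bound[OF fB indS] by blast
      thus False using \<open>card B < card C\<close> card by linarith
    qed
    then obtain w where w: "w \<in> S" "w \<notin> span B" by auto
    have Mspan: "{\<Sum>b\<in>B. l b *\<^sub>R b | l. \<forall>b\<in>B. l b \<in> (UNIV::real set)} = span B"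
      using span_finite[OF fB] by auto
    obtain u where u: "norm u = 1" and uk: "\<forall>k\<in>span B. 1 \<le> norm (u - k)"
      using far_unit[OF fB B(2), of UNIV w] w(2) unfolding Mspan by auto
    show ?thesis
    proof (intro exI[of _ u] conjI u ballI allI impI)
      fix c and t :: real assume c: "c \<in> C" and t: "t \<ge> 0"
      have "t *\<^sub>R c \<in> span B" using B(3) c by (simp add: span_scale subsetD)
      thus "1 \<le> norm (u - t *\<^sub>R c)" using uk by blast
    qed
  qed
  then obtain u where u: "norm u = 1" and uk: "\<forall>c\<in>C. \<forall>t\<ge>0. 1 \<le> norm (u - t *\<^sub>R c)" by blast
  show ?thesis
  proof (intro exI[of _ u] conjI u ballI)
    fix c assume c: "c \<in> C"
    have c0: "c \<noteq> 0" using c C0 by auto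
    have h1: "1 \<le> norm (u - c)" using uk c by (metis scaleR_one zero_le_one)
    have h2: "1 \<le> norm (u - (1/2) *\<^sub>R c)" using uk c by simp
    show "1 < norm (u - c)" by (rule strict_step[OF strict u c0 h1 h2])
  qed
qed


lemma iso_ball:
  fixes f :: "'a::real_normed_vector \<Rightarrow> 'a"
  assumes "surj f" "\<forall>x y. norm (f x - f y) = norm (x - y)"
  shows "f ` ball x r = ball (f x) r"
proof
  show "f ` ball x r \<subseteq> ball (f x) r"
    using assms(2) by (auto simp: dist_norm)
  show "ball (f x) r \<subseteq> f ` ball x r"
  proof
    fix z assume z: "z \<in> ball (f x) r"
    obtain y where y: "z = f y" using assms(1) by (metis surjD)
    have "dist x y < r" using z y assms(2) by (simp add: dist_norm)
    thus "z \<in> f ` ball x r" using y by auto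
  qed
qed

theorem proposition1:
  fixes A :: "nat \<Rightarrow> 'a::real_normed_vector set" and E :: "'a set" and m :: nat
  assumes dim_gt1: "\<exists>S :: 'a set. finite S \<and> card S = 2 \<and> independent S"
    and strict: "strictly_convex_norm TYPE('a)"
    and dim_ge_m: "\<exists>S :: 'a set. finite S \<and> card S = m \<and> independent S"
    and E_lower: "ball 0 1 \<subseteq> E" and E_upper: "E \<subseteq> cball 0 1"
    and E_union: "E = (\<Union>i\<in>{1..m}. A i)"
    and cong: "\<forall>i\<in>{1..m}. \<forall>j\<in>{1..m}. congruent_sets (A i) (A j)"
  shows "0 \<in> (\<Inter>i\<in>{1..m}. interior (A i)) \<or> 0 \<notin> (\<Union>i\<in>{1..m}. interior (A i))"
proof (rule ccontr)
  assume H: "\<not> (0 \<in> (\<Inter>i\<in>{1..m}. interior (A i)) \<or> 0 \<notin> (\<Union>i\<in>{1..m}. interior (A i)))"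
  then obtain i0 where i0: "i0 \<in> {1..m}" "0 \<in> interior (A i0)" by auto
  from H obtain j0 where j0: "j0 \<in> {1..m}" "0 \<notin> interior (A j0)" by auto
  have "\<forall>k\<in>{1..m}. \<exists>f. surj f \<and> (\<forall>x y. norm (f x - f y) = norm (x - y)) \<and> f ` A i0 = A k"
    using cong i0(1) unfolding congruent_sets_def by blast
  from bchoice[OF this] obtain g where g: "\<forall>k\<in>{1..m}. surj (g k) \<and> (\<forall>x y. norm (g k x - g k y) = norm (x - y)) \<and> g k ` A i0 = A k"
    by blast
  obtain r where r: "r > 0" "ball 0 r \<subseteq> A i0" using i0(2) mem_interior by blast
  have gj: "surj (g j0)" "\<forall>x y. norm (g j0 x - g j0 y) = norm (x - y)" "g j0 ` A i0 = A j0"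
    using g j0(1) by auto
  have gj0: "g j0 0 \<noteq> 0"
  proof
    assume z: "g j0 0 = 0"
    have "ball 0 r = g j0 ` ball 0 r" using iso_ball[OF gj(1,2)] z by simp
    also have "\<dots> \<subseteq> A j0" using r(2) gj(3) by blast
    finally show False using j0(2) r(1) mem_interior by blast
  qed
  obtain q where q: "g j0 q = 0" using gj(1) by (metis surjD)
  have q0: "q \<noteq> 0" using q gj0 by auto
  have AsubE: "A k \<subseteq> E" if "k \<in> {1..m}" for k using E_union that by blast
  have AE: "A i0 \<subseteq> cball 0 1" using AsubE[OF i0(1)] E_upper by (rule subset_trans)
  have Aq: "A i0 \<subseteq> cball q 1"
  proof
    fix x assume x: "x \<in> A i0"
    have "g j0 x \<in> A j0" using x gj(3) by blast
    hence "g j0 x \<in> cball 0 1" using AsubE[OF j0(1)] E_upper by blast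
    moreover have "norm (q - x) = norm (g j0 q - g j0 x)" using gj(2) by simp
    ultimately show "x \<in> cball q 1" using q by (simp add: dist_norm)
  qed
  define c where "c k = (if g k 0 \<noteq> 0 then g k 0 else g k q)" for k
  have c_nz: "c k \<noteq> 0" if k: "k \<in> {1..m}" for k
  proof -
    have "norm (g k q - g k 0) = norm (q - 0)" using g k by blast
    thus ?thesis using q0 by (auto simp: c_def)
  qed
  have Ak: "A k \<subseteq> cball (c k) 1" if k: "k \<in> {1..m}" for k
  proof
    fix x assume "x \<in> A k"
    then obtain y where y: "y \<in> A i0" "x = g k y" using g k by blast
    have iso: "\<forall>x y. norm (g k x - g k y) = norm (x - y)" using g k by blast
    show "x \<in> cball (c k) 1"
    proof (cases "g k 0 \<noteq> 0")
      case True
      have "norm (g k 0 - g k y) = norm (0 - y)" using iso by blast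
      thus ?thesis using True y AE by (auto simp: c_def dist_norm)
    next
      case False
      have "norm (g k q - g k y) = norm (q - y)" using iso by blast
      thus ?thesis using False y Aq by (auto simp: c_def dist_norm)
    qed
  qed
  have "E \<subseteq> (\<Union>k\<in>{1..m}. cball (c k) 1)"
    unfolding E_union using Ak by blast
  hence bU: "ball 0 1 \<subseteq> (\<Union>k\<in>{1..m}. cball (c k) 1)"
    using E_lower by (rule subset_trans[rotated])
  have cU: "closed (\<Union>k\<in>{1..m}. cball (c k) 1)" by (intro closed_UN) auto
  have cl: "closure (ball (0::'a) 1) = cball 0 1" by (rule closure_ball) simp
  have cov: "cball 0 1 \<subseteq> (\<Union>k\<in>{1..m}. cball (c k) 1)"
    using closure_minimal[OF bU cU] unfolding cl .
  obtain S :: "'a set" where S: "finite S" "card S = m" "independent S" using dim_ge_m by blast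
  have "card (c ` {1..m}) \<le> card S" using card_image_le[of "{1..m}" c] S(2) by simp
  moreover have "0 \<notin> c ` {1..m}" using c_nz by auto
  moreover have "c ` {1..m} \<noteq> {}" using i0(1) by auto
  ultimately obtain u where u: "norm u = 1" "\<forall>z\<in>c ` {1..m}. 1 < norm (u - z)"
    using KL[OF strict _ _ _ _ S(3), of "c ` {1..m}"] by auto
  have "u \<in> cball 0 1" using u(1) by simp
  then obtain k where k: "k \<in> {1..m}" "u \<in> cball (c k) 1" using cov by blast
  have "norm (u - c k) \<le> 1" using k(2) by (simp add: dist_norm norm_minus_commute)
  moreover have "1 < norm (u - c k)" using u(2) k(1) by blast
  ultimately show False by linarith
qed

end
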